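(* There exists a ring satisfying (NK) if and only if there exists a countably generated $F$-algebra satisfying (NK), where $F=\mathbb Q$ or $F=\mathbb Z_p$ for some prime number $p$. Equivalently, Köthe's Conjecture holds if and only if there is no countably generated $F$-algebra satisfying (NK) with $F=\mathbb Q$ or $F=\mathbb Z_p$, $p$ prime.
   Context: All rings are associative with unit. A right ideal is nil if all its elements are nilpotent. A ring satisfies the condition (NK) if it contains two nil right ideals whose sum is not nil. Köthe's Conjecture (every ring with no non-zero nil two-sided ideal has no non-zero nil one-sided ideal) is known to be equivalent to the statement that no ring satisfies (NK). *)

theory Defs
  imports "HOL-Algebra.Algebra" "HOL-Number_Theory.Residues"
begin

definition right_ideal :: "('a, 'b) ring_scheme \<Rightarrow> 'a set \<Rightarrow> bool" where
  "right_ideal R I \<longleftrightarrow> additive_subgroup I R \<and>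
     (\<forall>x\<in>I. \<forall>r\<in>carrier R. x \<otimes>\<^bsub>R\<^esub> r \<in> I)"

definition nilpotent_elem :: "('a, 'b) ring_scheme \<Rightarrow> 'a \<Rightarrow> bool" where
  "nilpotent_elem R x \<longleftrightarrow> (\<exists>n::nat. x [^]\<^bsub>R\<^esub> n = \<zero>\<^bsub>R\<^esub>)"

definition nil_set :: "('a, 'b) ring_scheme \<Rightarrow> 'a set \<Rightarrow> bool" where
  "nil_set R I \<longleftrightarrow> (\<forall>x\<in>I. nilpotent_elem R x)"

definition NK :: "('a, 'b) ring_scheme \<Rightarrow> bool" where
  "NK R \<longleftrightarrow> (\<exists>I J. right_ideal R I \<and> right_ideal R J \<and> nil_set R I \<and> nil_set R J \<and>
      \<not> nil_set R (I <+>\<^bsub>R\<^esub> J))"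

definition rat_ring :: "rat ring" where
  "rat_ring = \<lparr>carrier = UNIV, monoid.mult = \<lambda>x y. x * y, one = 1, ring.zero = 0, ring.add = \<lambda>x y. x + y\<rparr>"

definition algebra_over :: "('f, 'c) ring_scheme \<Rightarrow> ('a, 'b) ring_scheme \<Rightarrow> ('f \<Rightarrow> 'a) \<Rightarrow> bool" where
  "algebra_over F A \<phi> \<longleftrightarrow> ring A \<and> \<phi> \<in> ring_hom F A \<and>
     (\<forall>c\<in>carrier F. \<forall>x\<in>carrier A. \<phi> c \<otimes>\<^bsub>A\<^esub> x = x \<otimes>\<^bsub>A\<^esub> \<phi> c)"

definition countably_generated_algebra ::
  "('f, 'c) ring_scheme \<Rightarrow> ('a, 'b) ring_scheme \<Rightarrow> ('f \<Rightarrow> 'a) \<Rightarrow> bool" where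
  "countably_generated_algebra F A \<phi> \<longleftrightarrow> algebra_over F A \<phi> \<and>
     (\<exists>S. countable S \<and> S \<subseteq> carrier A \<and> carrier A = generate_ring A (\<phi> ` carrier F \<union> S))"

definition exists_cg_NK_algebra :: "'a itself \<Rightarrow> bool" where
  "exists_cg_NK_algebra _ \<longleftrightarrow>
     (\<exists>(A::'a ring) \<phi>. countably_generated_algebra rat_ring A \<phi> \<and> NK A) \<or>
     (\<exists>p::int. Factorial_Ring.prime p \<and> (\<exists>(A::'a ring) \<phi>. countably_generated_algebra (residue_ring p) A \<phi> \<and> NK A))"

end

theory Submission
  imports Defs "HOL-Library.Countable"
begin

definition NKe :: "('a, 'b) ring_scheme \<Rightarrow> 'a \<Rightarrow> 'a \<Rightarrow> bool" where
  "NKe A a b \<longleftrightarrow> a \<in> carrier A \<and> b \<in> carrier A \<and>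
    (\<forall>r\<in>carrier A. nilpotent_elem A (a \<otimes>\<^bsub>A\<^esub> r)) \<and>
    (\<forall>r\<in>carrier A. nilpotent_elem A (b \<otimes>\<^bsub>A\<^esub> r)) \<and>
    \<not> nilpotent_elem A (a \<oplus>\<^bsub>A\<^esub> b)"

lemma NK_NKe:
  fixes A :: "('a, 'b) ring_scheme" (structure)
  assumes "ring A" "NK A" shows "\<exists>a b. NKe A a b"
proof -
  interpret ring A by fact
  obtain I J where I: "right_ideal A I" and J: "right_ideal A J" and nI: "nil_set A I"
    and nJ: "nil_set A J" and n: "\<not> nil_set A (I <+>\<^bsub>A\<^esub> J)"
    using assms(2) unfolding NK_def by blast
  obtain x where x: "x \<in> I <+>\<^bsub>A\<^esub> J" "\<not> nilpotent_elem A x"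
    using n unfolding nil_set_def by blast
  then obtain i j where ij: "i \<in> I" "j \<in> J" "x = i \<oplus> j"
    unfolding set_add_def' by blast
  have Ic: "I \<subseteq> carrier A" using I unfolding right_ideal_def
    using additive_subgroup.a_subset by blast
  have Jc: "J \<subseteq> carrier A" using J unfolding right_ideal_def
    using additive_subgroup.a_subset by blast
  have "NKe A i j"
    unfolding NKe_def using ij x Ic Jc I J nI nJ unfolding right_ideal_def nil_set_def by blast
  thus ?thesis by blast
qed

lemma principal_right_ideal:
  fixes A :: "('a, 'b) ring_scheme" (structure)
  assumes "ring A" "a \<in> carrier A"
  shows "right_ideal A ((\<lambda>r. a \<otimes>\<^bsub>A\<^esub> r) ` carrier A)"
proof -
  interpret ring A by fact
  have "subgroup ((\<lambda>r. a \<otimes> r) ` carrier A) (add_monoid A)"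
  proof (rule add.subgroupI)
    show "(\<otimes>) a ` carrier A \<subseteq> carrier A" using assms(2) by auto
    show "(\<otimes>) a ` carrier A \<noteq> {}" by auto
  next
    fix x assume "x \<in> (\<otimes>) a ` carrier A"
    then obtain r where r: "r \<in> carrier A" "x = a \<otimes> r" by blast
    hence "\<ominus> x = a \<otimes> (\<ominus> r)" using assms(2) by (simp add: r_minus)
    thus "\<ominus> x \<in> (\<otimes>) a ` carrier A" using r(1) by blast
  next
    fix x y assume "x \<in> (\<otimes>) a ` carrier A" "y \<in> (\<otimes>) a ` carrier A"
    then obtain r s where r: "r \<in> carrier A" "x = a \<otimes> r" "s \<in> carrier A" "y = a \<otimes> s" by blast
    hence "x \<oplus> y = a \<otimes> (r \<oplus> s)" using assms(2) by (simp add: r_distr)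
    thus "x \<oplus> y \<in> (\<otimes>) a ` carrier A" using r by blast
  qed
  hence "additive_subgroup ((\<lambda>r. a \<otimes> r) ` carrier A) A" by (rule additive_subgroupI)
  moreover have "\<forall>x\<in>(\<lambda>r. a \<otimes> r) ` carrier A. \<forall>r\<in>carrier A. x \<otimes> r \<in> (\<lambda>r. a \<otimes> r) ` carrier A"
  proof (intro ballI)
    fix x r assume "x \<in> (\<lambda>r. a \<otimes> r) ` carrier A" "r \<in> carrier A"
    then obtain s where s: "s \<in> carrier A" "x = a \<otimes> s" by blast
    hence "x \<otimes> r = a \<otimes> (s \<otimes> r)" using assms(2) \<open>r \<in> carrier A\<close> by (simp add: m_assoc)
    thus "x \<otimes> r \<in> (\<lambda>r. a \<otimes> r) ` carrier A" using s \<open>r \<in> carrier A\<close> by blast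
  qed
  ultimately show ?thesis unfolding right_ideal_def by blast
qed

lemma NKe_NK:
  fixes A :: "('a, 'b) ring_scheme" (structure)
  assumes "ring A" "NKe A a b" shows "NK A"
proof -
  interpret ring A by fact
  have a: "a \<in> carrier A" and b: "b \<in> carrier A" using assms(2) unfolding NKe_def by auto
  let ?I = "(\<lambda>r. a \<otimes> r) ` carrier A" and ?J = "(\<lambda>r. b \<otimes> r) ` carrier A"
  have r: "right_ideal A ?I" "right_ideal A ?J" using principal_right_ideal[OF assms(1)] a b by blast+
  have n: "nil_set A ?I" "nil_set A ?J" using assms(2) unfolding NKe_def nil_set_def by blast+
  have "a \<oplus> b \<in> ?I <+>\<^bsub>A\<^esub> ?J"
  proof -
    have "a \<otimes> \<one> \<in> ?I" "b \<otimes> \<one> \<in> ?J" by (rule imageI, rule one_closed)+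
    moreover have "a \<oplus> b = (a \<otimes> \<one>) \<oplus> (b \<otimes> \<one>)" using a b by simp
    ultimately show ?thesis unfolding set_add_def' by blast
  qed
  moreover have "\<not> nilpotent_elem A (a \<oplus> b)" using assms(2) unfolding NKe_def by blast
  ultimately have "\<not> nil_set A (?I <+>\<^bsub>A\<^esub> ?J)" unfolding nil_set_def by blast
  thus ?thesis unfolding NK_def using r n by blast
qed

lemma hom_pow:
  assumes "ring A" "f \<in> ring_hom A B" "x \<in> carrier A"
  shows "f (x [^]\<^bsub>A\<^esub> (n::nat)) = f x [^]\<^bsub>B\<^esub> n"
proof (induction n)
  case 0 then show ?case using assms(2) by (simp add: ring_hom_one)
next
  case (Suc n)
  have "f (x [^]\<^bsub>A\<^esub> Suc n) = f (x [^]\<^bsub>A\<^esub> n) \<otimes>\<^bsub>B\<^esub> f x"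
    using assms by (simp add: ring_hom_mult monoid.nat_pow_closed ring.is_monoid)
  then show ?case using Suc by simp
qed

lemma nilp_hom:
  assumes "ring A" "ring B" "f \<in> ring_hom A B" "x \<in> carrier A" "nilpotent_elem A x"
  shows "nilpotent_elem B (f x)"
  using assms hom_pow[OF assms(1,3,4)] ring_hom_zero[OF assms(3,1,2)]
  unfolding nilpotent_elem_def by metis

lemma nilp_hom_inj:
  assumes "ring A" "ring B" "f \<in> ring_hom A B" "x \<in> carrier A" "inj_on f (carrier A)"
    "nilpotent_elem B (f x)"
  shows "nilpotent_elem A x"
proof -
  obtain n where "f x [^]\<^bsub>B\<^esub> (n::nat) = \<zero>\<^bsub>B\<^esub>" using assms(6) unfolding nilpotent_elem_def by blast
  hence "f (x [^]\<^bsub>A\<^esub> n) = f \<zero>\<^bsub>A\<^esub>"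
    using hom_pow[OF assms(1,3,4)] ring_hom_zero[OF assms(3,1,2)] by simp
  hence "x [^]\<^bsub>A\<^esub> n = \<zero>\<^bsub>A\<^esub>"
    using assms(5) assms(1,4) by (meson inj_onD monoid.nat_pow_closed ring.is_monoid ring.ring_simprules(2))
  thus ?thesis unfolding nilpotent_elem_def by blast
qed

lemma NKe_hom_inj:
  assumes "ring A" "ring B" "f \<in> ring_hom A B" "inj_on f (carrier A)"
    "f ` carrier A = carrier B" "NKe A a b"
  shows "NKe B (f a) (f b)"
proof -
  have a: "a \<in> carrier A" and b: "b \<in> carrier A" using assms(6) unfolding NKe_def by auto
  have "\<forall>r\<in>carrier B. nilpotent_elem B (f a \<otimes>\<^bsub>B\<^esub> r)"
  proof
    fix r assume "r \<in> carrier B"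
    then obtain s where s: "s \<in> carrier A" "r = f s" using assms(5) by auto
    have "f a \<otimes>\<^bsub>B\<^esub> r = f (a \<otimes>\<^bsub>A\<^esub> s)" using s a assms(3) by (simp add: ring_hom_mult)
    moreover have "a \<otimes>\<^bsub>A\<^esub> s \<in> carrier A" using a s(1) ring.ring_simprules(5)[OF assms(1)] by blast
    moreover have "nilpotent_elem A (a \<otimes>\<^bsub>A\<^esub> s)" using assms(6) s(1) unfolding NKe_def by blast
    ultimately show "nilpotent_elem B (f a \<otimes>\<^bsub>B\<^esub> r)"
      using nilp_hom[OF assms(1-3)] by simp
  qed
  moreover have "\<forall>r\<in>carrier B. nilpotent_elem B (f b \<otimes>\<^bsub>B\<^esub> r)"
  proof
    fix r assume "r \<in> carrier B"
    then obtain s where s: "s \<in> carrier A" "r = f s" using assms(5) by auto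
    have "f b \<otimes>\<^bsub>B\<^esub> r = f (b \<otimes>\<^bsub>A\<^esub> s)" using s b assms(3) by (simp add: ring_hom_mult)
    moreover have "b \<otimes>\<^bsub>A\<^esub> s \<in> carrier A" using b s(1) ring.ring_simprules(5)[OF assms(1)] by blast
    moreover have "nilpotent_elem A (b \<otimes>\<^bsub>A\<^esub> s)" using assms(6) s(1) unfolding NKe_def by blast
    ultimately show "nilpotent_elem B (f b \<otimes>\<^bsub>B\<^esub> r)"
      using nilp_hom[OF assms(1-3)] by simp
  qed
  moreover have "\<not> nilpotent_elem B (f a \<oplus>\<^bsub>B\<^esub> f b)"
  proof
    assume "nilpotent_elem B (f a \<oplus>\<^bsub>B\<^esub> f b)"
    hence "nilpotent_elem B (f (a \<oplus>\<^bsub>A\<^esub> b))" using assms(3) a b by (simp add: ring_hom_add)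
    moreover have "a \<oplus>\<^bsub>A\<^esub> b \<in> carrier A" using a b ring.ring_simprules(1)[OF assms(1)] by blast
    ultimately have "nilpotent_elem A (a \<oplus>\<^bsub>A\<^esub> b)"
      using nilp_hom_inj[OF assms(1-3) _ assms(4)] by blast
    thus False using assms(6) unfolding NKe_def by blast
  qed
  moreover have "f a \<in> carrier B" "f b \<in> carrier B" using a b ring_hom_closed[OF assms(3)] by blast+
  ultimately show ?thesis unfolding NKe_def by blast
qed

lemma transport:
  assumes "ring A" "countable (carrier A)" "algebra_over F A \<phi>" "NKe A a b"
  shows "\<exists>(A'::nat ring) \<phi>'. countably_generated_algebra F A' \<phi>' \<and> NK A'"
proof -
  define h where "h = to_nat_on (carrier A)"
  have inj: "inj_on h (carrier A)" unfolding h_def using assms(2) by (rule inj_on_to_nat_on)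
  define A' where "A' = image_ring h A"
  have iso: "h \<in> ring_iso A A'" unfolding A'_def using inj by (rule inj_imp_image_ring_iso)
  have hom: "h \<in> ring_hom A A'" using iso unfolding ring_iso_def by blast
  have rA': "ring A'" unfolding A'_def using ring.inj_imp_image_ring_is_ring[OF assms(1) inj] .
  have car: "carrier A' = h ` carrier A" unfolding A'_def by (rule image_ring_carrier)
  have phom: "\<phi> \<in> ring_hom F A" using assms(3) unfolding algebra_over_def by blast
  have hom': "h \<circ> \<phi> \<in> ring_hom F A'" using ring_hom_trans[OF phom hom] .
  have cen: "\<forall>c\<in>carrier F. \<forall>x\<in>carrier A'. (h \<circ> \<phi>) c \<otimes>\<^bsub>A'\<^esub> x = x \<otimes>\<^bsub>A'\<^esub> (h \<circ> \<phi>) c"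
  proof (intro ballI)
    fix c x assume c: "c \<in> carrier F" and x: "x \<in> carrier A'"
    obtain y where y: "y \<in> carrier A" "x = h y" using x unfolding car by blast
    have pc: "\<phi> c \<in> carrier A" using ring_hom_closed[OF phom c] .
    have "(h \<circ> \<phi>) c \<otimes>\<^bsub>A'\<^esub> x = h (\<phi> c \<otimes>\<^bsub>A\<^esub> y)"
      unfolding y(2) comp_def using ring_hom_mult[OF hom pc y(1)] by simp
    also have "\<dots> = h (y \<otimes>\<^bsub>A\<^esub> \<phi> c)"
    proof -
      have "\<phi> c \<otimes>\<^bsub>A\<^esub> y = y \<otimes>\<^bsub>A\<^esub> \<phi> c" using assms(3) c y(1) unfolding algebra_over_def by blast
      thus ?thesis by simp
    qed
    also have "\<dots> = x \<otimes>\<^bsub>A'\<^esub> (h \<circ> \<phi>) c"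
      unfolding y(2) comp_def using ring_hom_mult[OF hom y(1) pc] by simp
    finally show "(h \<circ> \<phi>) c \<otimes>\<^bsub>A'\<^esub> x = x \<otimes>\<^bsub>A'\<^esub> (h \<circ> \<phi>) c" .
  qed
  have alg: "algebra_over F A' (h \<circ> \<phi>)" unfolding algebra_over_def by (intro conjI rA' hom' cen)
  have img: "(h \<circ> \<phi>) ` carrier F \<subseteq> carrier A'" by (rule image_subsetI, rule ring_hom_closed[OF hom'])
  have gen: "carrier A' = generate_ring A' ((h \<circ> \<phi>) ` carrier F \<union> carrier A')"
  proof
    show "carrier A' \<subseteq> generate_ring A' ((h \<circ> \<phi>) ` carrier F \<union> carrier A')"
      by (blast intro: generate_ring.incl)
    show "generate_ring A' ((h \<circ> \<phi>) ` carrier F \<union> carrier A') \<subseteq> carrier A'"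
      by (rule ring.generate_ring_incl[OF rA'], rule Un_least[OF img subset_refl])
  qed
  have cA': "countable (carrier A')" using car assms(2) by simp
  have "countably_generated_algebra F A' (h \<circ> \<phi>)"
    unfolding countably_generated_algebra_def
    by (intro conjI alg exI[of _ "carrier A'"] cA' subset_refl gen)
  moreover have "NK A'"
    using NKe_NK[OF rA' NKe_hom_inj[OF assms(1) rA' hom inj car[symmetric] assms(4)]] .
  ultimately show ?thesis by blast
qed

datatype tm = One | V bool | Neg tm | Add tm tm | Mul tm tm
instance tm :: countable by countable_datatype

fun ev :: "('a, 'b) ring_scheme \<Rightarrow> 'a \<Rightarrow> 'a \<Rightarrow> tm \<Rightarrow> 'a" where
  "ev R a b One = \<one>\<^bsub>R\<^esub>"
| "ev R a b (V x) = (if x then a else b)"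
| "ev R a b (Neg t) = \<ominus>\<^bsub>R\<^esub> ev R a b t"
| "ev R a b (Add t u) = ev R a b t \<oplus>\<^bsub>R\<^esub> ev R a b u"
| "ev R a b (Mul t u) = ev R a b t \<otimes>\<^bsub>R\<^esub> ev R a b u"

lemma gen_countable: "countable (generate_ring R {a, b})"
proof -
  have "generate_ring R {a, b} \<subseteq> range (ev R a b)"
  proof
    fix x assume "x \<in> generate_ring R {a, b}"
    then show "x \<in> range (ev R a b)"
    proof (induction rule: generate_ring.induct)
      case one
      have "ev R a b One = \<one>\<^bsub>R\<^esub>" by simp
      then show ?case by (metis rangeI)
    next
      case (incl h)
      then have "h = ev R a b (V True) \<or> h = ev R a b (V False)" by auto
      then show ?case by (metis rangeI)
    next
      case (a_inv h)
      then obtain t where "h = ev R a b t" by blast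
      then have "\<ominus>\<^bsub>R\<^esub> h = ev R a b (Neg t)" by simp
      then show ?case by (metis rangeI)
    next
      case (eng_add h1 h2)
      then obtain t u where "h1 = ev R a b t" "h2 = ev R a b u" by blast
      then have "h1 \<oplus>\<^bsub>R\<^esub> h2 = ev R a b (Add t u)" by simp
      then show ?case by (metis rangeI)
    next
      case (eng_mult h1 h2)
      then obtain t u where "h1 = ev R a b t" "h2 = ev R a b u" by blast
      then have "h1 \<otimes>\<^bsub>R\<^esub> h2 = ev R a b (Mul t u)" by simp
      then show ?case by (metis rangeI)
    qed
  qed
  moreover have "countable (range (ev R a b))" by (rule countable_image) simp
  ultimately show ?thesis by (rule countable_subset)
qed

lemma nilp_sub: "nilpotent_elem (R\<lparr>carrier := K\<rparr>) x = nilpotent_elem R x"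
  by (simp add: nilpotent_elem_def nat_pow_def)

lemma sub_NK:
  fixes R :: "('a, 'b) ring_scheme"
  assumes "ring R" "NK R"
  shows "\<exists>(S::('a, 'b) ring_scheme) a b. ring S \<and> countable (carrier S) \<and> NKe S a b"
proof -
  obtain a b where ab: "NKe R a b" using NK_NKe[OF assms] by blast
  have H: "{a, b} \<subseteq> carrier R" using ab unfolding NKe_def by blast
  let ?K = "generate_ring R {a, b}"
  let ?S = "R\<lparr>carrier := ?K\<rparr>"
  have rS: "ring ?S" using ring.generate_ring_is_ring[OF assms(1) H] .
  have Kc: "?K \<subseteq> carrier R" using ring.generate_ring_incl[OF assms(1) H] .
  have aK: "a \<in> ?K" "b \<in> ?K" by (auto intro: generate_ring.incl)
  have "NKe ?S a b"
    unfolding NKe_def nilp_sub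
  proof (intro conjI ballI)
    show "a \<in> carrier ?S" "b \<in> carrier ?S" using aK by simp_all
  next
    fix r assume "r \<in> carrier ?S"
    hence "r \<in> carrier R" using Kc by auto
    thus "nilpotent_elem R (a \<otimes>\<^bsub>?S\<^esub> r)" using ab unfolding NKe_def by simp
  next
    fix r assume "r \<in> carrier ?S"
    hence "r \<in> carrier R" using Kc by auto
    thus "nilpotent_elem R (b \<otimes>\<^bsub>?S\<^esub> r)" using ab unfolding NKe_def by simp
  next
    show "\<not> nilpotent_elem R (a \<oplus>\<^bsub>?S\<^esub> b)" using ab unfolding NKe_def by simp
  qed
  moreover have "countable (carrier ?S)" using gen_countable by simp
  ultimately show ?thesis using rS by blast
qed

lemma torsion_dich:
  fixes R :: "('a, 'b) ring_scheme" (structure)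
  assumes "ring R" "c \<in> carrier R" "\<not> nilpotent_elem R c"
  shows "(\<exists>p::int. Factorial_Ring.prime p \<and> (\<forall>n::nat. \<forall>s\<in>carrier R. c [^] n \<noteq> [p] \<cdot> s))
       \<or> (\<forall>k::int. k > 0 \<longrightarrow> (\<forall>n::nat. [k] \<cdot> (c [^] n) \<noteq> \<zero>))"
proof (rule ccontr)
  interpret ring R by fact
  assume "\<not> ?thesis"
  then have H1: "\<And>p::int. Factorial_Ring.prime p \<Longrightarrow> \<exists>n::nat. \<exists>s\<in>carrier R. c [^] n = [p] \<cdot> s"
    and H2: "\<exists>k::int. k > 0 \<and> (\<exists>n::nat. [k] \<cdot> (c [^] n) = \<zero>)" by blast+
  have claim: "\<exists>N::nat. \<exists>s\<in>carrier R. c [^] N = [(int m)] \<cdot> s" if "m > 0" for m :: nat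
    using that
  proof (induction m rule: less_induct)
    case (less m)
    show ?case
    proof (cases "m = 1")
      case True
      have "c [^] (0::nat) = [(int m)] \<cdot> \<one>" using True by simp
      thus ?thesis by blast
    next
      case False
      obtain p where p: "Factorial_Ring.prime p" "p dvd m" using prime_factor_nat[OF False] by blast
      then obtain m' where m': "m = p * m'" by (auto elim: dvdE)
      have p1: "p > 1" using prime_gt_1_nat[OF p(1)] .
      have m'pos: "m' > 0" using less.prems m' by (metis mult_0_right neq0_conv)
      have "1 * m' < p * m'" by (rule mult_strict_right_mono[OF p1 m'pos])
      hence m'lt: "m' < m" using m' by simp
      obtain N2 :: nat and t where t: "t \<in> carrier R" "c [^] N2 = [(int m')] \<cdot> t"
        using less.IH[OF m'lt m'pos] by blast
      have "Factorial_Ring.prime (int p)" using p(1) by (simp add: prime_nat_int_transfer)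
      then obtain N1 :: nat and s where s: "s \<in> carrier R" "c [^] N1 = [(int p)] \<cdot> s" using H1 by blast
      have "c [^] (N1 + N2) = c [^] N1 \<otimes> c [^] N2" using assms(2) by (simp add: nat_pow_mult)
      also have "\<dots> = [(int p)] \<cdot> s \<otimes> [(int m')] \<cdot> t" using s t by simp
      also have "\<dots> = [(int p)] \<cdot> (s \<otimes> [(int m')] \<cdot> t)" using s t by (simp add: add_pow_ldistr_int)
      also have "\<dots> = [(int p)] \<cdot> ([(int m')] \<cdot> (s \<otimes> t))" using s t by (simp add: add_pow_rdistr_int)
      also have "\<dots> = [(int m' * int p)] \<cdot> (s \<otimes> t)" using s t by (simp add: add.int_pow_pow)
      also have "\<dots> = [(int m)] \<cdot> (s \<otimes> t)" using m' by (simp add: mult.commute)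
      finally show ?thesis using s t by blast
    qed
  qed
  obtain k :: int and n :: nat where k: "k > 0" "[k] \<cdot> (c [^] (n::nat)) = \<zero>" using H2 by blast
  obtain N :: nat and s where s: "s \<in> carrier R" "c [^] N = [(int (nat k))] \<cdot> s" using claim[of "nat k"] k(1) by auto
  have cn: "c [^] n \<in> carrier R" using assms(2) by simp
  have "c [^] (N + n) = c [^] N \<otimes> c [^] n" using assms(2) by (simp add: nat_pow_mult)
  also have "\<dots> = [k] \<cdot> s \<otimes> c [^] n" using s k(1) by simp
  also have "\<dots> = [k] \<cdot> (s \<otimes> c [^] n)" using s cn by (simp add: add_pow_ldistr_int)
  also have "\<dots> = s \<otimes> [k] \<cdot> (c [^] n)" using s cn by (simp add: add_pow_rdistr_int)
  also have "\<dots> = \<zero>" using k(2) s by simp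
  finally have "nilpotent_elem R c" unfolding nilpotent_elem_def by blast
  thus False using assms(3) by blast
qed

lemma pideal_r:
  fixes R :: "('a, 'b) ring_scheme" (structure)
  assumes "ring R" "a \<in> (\<lambda>s. [(p::int)] \<cdot> s) ` carrier R" "x \<in> carrier R"
  shows "x \<otimes> a \<in> (\<lambda>s. [(p::int)] \<cdot> s) ` carrier R"
proof -
  interpret ring R by fact
  obtain r where r: "r \<in> carrier R" "a = [p] \<cdot> r" using assms(2) by blast
  have "x \<otimes> a = [p] \<cdot> (x \<otimes> r)" unfolding r(2) by (rule add_pow_rdistr_int[OF assms(3) r(1)])
  moreover have "x \<otimes> r \<in> carrier R" using assms(3) r(1) by (rule m_closed)
  ultimately show ?thesis by (rule image_eqI)
qed

lemma pideal_l:
  fixes R :: "('a, 'b) ring_scheme" (structure)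
  assumes "ring R" "a \<in> (\<lambda>s. [(p::int)] \<cdot> s) ` carrier R" "x \<in> carrier R"
  shows "a \<otimes> x \<in> (\<lambda>s. [(p::int)] \<cdot> s) ` carrier R"
proof -
  interpret ring R by fact
  obtain r where r: "r \<in> carrier R" "a = [p] \<cdot> r" using assms(2) by blast
  have "a \<otimes> x = [p] \<cdot> (r \<otimes> x)" unfolding r(2) by (rule add_pow_ldistr_int[OF r(1) assms(3)])
  moreover have "r \<otimes> x \<in> carrier R" using r(1) assms(3) by (rule m_closed)
  ultimately show ?thesis by (rule image_eqI)
qed

lemma pideal_sub:
  fixes R :: "('a, 'b) ring_scheme" (structure)
  assumes "ring R"
  shows "subgroup ((\<lambda>s. [(p::int)] \<cdot> s) ` carrier R) (add_monoid R)"
proof -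
  interpret ring R by fact
  show ?thesis
  proof (rule add.subgroupI)
    show "(\<lambda>s. [p] \<cdot> s) ` carrier R \<subseteq> carrier R" by (rule image_subsetI, rule add.int_pow_closed)
    show "(\<lambda>s. [p] \<cdot> s) ` carrier R \<noteq> {}" using zero_closed by blast
  next
    fix x assume "x \<in> (\<lambda>s. [p] \<cdot> s) ` carrier R"
    then obtain r where r: "r \<in> carrier R" "x = [p] \<cdot> r" by blast
    have "\<ominus> x = [p] \<cdot> (\<ominus> r)" unfolding r(2) by (rule add.int_pow_inv[OF r(1), symmetric])
    moreover have "\<ominus> r \<in> carrier R" using r(1) by (rule a_inv_closed)
    ultimately show "\<ominus> x \<in> (\<lambda>s. [p] \<cdot> s) ` carrier R" by (rule image_eqI)
  next
    fix x y assume "x \<in> (\<lambda>s. [p] \<cdot> s) ` carrier R" "y \<in> (\<lambda>s. [p] \<cdot> s) ` carrier R"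
    then obtain r s where r: "r \<in> carrier R" "x = [p] \<cdot> r" "s \<in> carrier R" "y = [p] \<cdot> s" by blast
    have "x \<oplus> y = [p] \<cdot> (r \<oplus> s)" unfolding r(2,4) by (rule add.int_pow_distrib[OF r(1,3), symmetric])
    moreover have "r \<oplus> s \<in> carrier R" using r(1,3) by (rule a_closed)
    ultimately show "x \<oplus> y \<in> (\<lambda>s. [p] \<cdot> s) ` carrier R" by (rule image_eqI)
  qed
qed

lemma pideal:
  fixes R :: "('a, 'b) ring_scheme" (structure)
  assumes "ring R"
  shows "ideal ((\<lambda>s. [(p::int)] \<cdot> s) ` carrier R) R"
  by (rule idealI[OF assms pideal_sub[OF assms]], erule (1) pideal_r[OF assms], erule (1) pideal_l[OF assms])

lemma NKeD:
  assumes "NKe A a b"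
  shows "a \<in> carrier A" "b \<in> carrier A"
    "r \<in> carrier A \<Longrightarrow> nilpotent_elem A (a \<otimes>\<^bsub>A\<^esub> r)"
    "r \<in> carrier A \<Longrightarrow> nilpotent_elem A (b \<otimes>\<^bsub>A\<^esub> r)"
    "\<not> nilpotent_elem A (a \<oplus>\<^bsub>A\<^esub> b)"
  using assms unfolding NKe_def by auto

lemma Zp_case:
  fixes R :: "('a, 'b) ring_scheme" (structure) and p :: int
  assumes rR: "ring R" and cR: "countable (carrier R)" and ab: "NKe R a b"
    and pp: "Factorial_Ring.prime p"
    and nt: "\<forall>n::nat. \<forall>s\<in>carrier R. (a \<oplus> b) [^] n \<noteq> [p] \<cdot> s"
  shows "\<exists>(A::nat ring) \<phi>. countably_generated_algebra (residue_ring p) A \<phi> \<and> NK A"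
proof -
  interpret ring R by fact
  define I where "I = (\<lambda>s. [p] \<cdot> s) ` carrier R"
  have iI: "ideal I R" unfolding I_def by (rule pideal[OF rR])
  interpret I: ideal I R by fact
  define Q where "Q = R Quot I"
  have rQ: "ring Q" unfolding Q_def by (rule I.quotient_is_ring)
  have Qrz: "\<And>y. y \<in> carrier Q \<Longrightarrow> y \<oplus>\<^bsub>Q\<^esub> \<zero>\<^bsub>Q\<^esub> = y"
    by (rule abelian_monoid.r_zero[OF abelian_group.axioms(1)[OF ring.is_abelian_group[OF rQ]]])
  define \<pi> where "\<pi> = (+>) I"
  have hom: "\<pi> \<in> ring_hom R Q" unfolding \<pi>_def Q_def by (rule I.rcos_ring_hom)
  have carQ: "carrier Q = \<pi> ` carrier R"
    unfolding Q_def \<pi>_def FactRing_def A_RCOSETS_def' partial_object.select_convs by (rule UNION_singleton_eq_range)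
  have zQ: "\<zero>\<^bsub>Q\<^esub> = I" unfolding Q_def FactRing_def by simp
  have piz: "x \<in> I" if "\<pi> x = \<zero>\<^bsub>Q\<^esub>" "x \<in> carrier R" for x
  proof -
    have "x \<in> I +> x" by (rule I.a_rcos_self[OF that(2)])
    thus ?thesis using that(1) unfolding zQ \<pi>_def by simp
  qed
  have piI: "\<pi> x = \<zero>\<^bsub>Q\<^esub>" if "x \<in> I" for x
    unfolding zQ \<pi>_def using I.a_rcos_const[OF that] .
  have pI: "[p] \<cdot> s \<in> I" if "s \<in> carrier R" for s
    unfolding I_def using that by (rule imageI)
  have pi_add_I: "\<pi> (x \<oplus> i) = \<pi> x" if "x \<in> carrier R" "i \<in> I" for x i
  proof -
    have ic: "i \<in> carrier R" using that(2) I.a_subset by blast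
    have "\<pi> (x \<oplus> i) = \<pi> x \<oplus>\<^bsub>Q\<^esub> \<pi> i" using ring_hom_add[OF hom that(1) ic] .
    also have "\<dots> = \<pi> x \<oplus>\<^bsub>Q\<^esub> \<zero>\<^bsub>Q\<^esub>" using piI[OF that(2)] by simp
    also have "\<dots> = \<pi> x" by (rule Qrz[OF ring_hom_closed[OF hom that(1)]])
    finally show ?thesis .
  qed
  have modp: "\<pi> ([(u mod p)] \<cdot> \<one>) = \<pi> ([u] \<cdot> \<one>)" for u :: int
  proof -
    have "[u] \<cdot> \<one> = [(u mod p + (u div p) * p)] \<cdot> \<one>" by simp
    also have "\<dots> = [(u mod p)] \<cdot> \<one> \<oplus> [((u div p) * p)] \<cdot> \<one>"
      by (rule add.int_pow_mult[OF one_closed])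
    also have "[((u div p) * p)] \<cdot> \<one> = [p] \<cdot> ([(u div p)] \<cdot> \<one>)"
      by (rule add.int_pow_pow[OF one_closed, symmetric])
    finally have "[u] \<cdot> \<one> = [(u mod p)] \<cdot> \<one> \<oplus> [p] \<cdot> ([(u div p)] \<cdot> \<one>)" .
    moreover have "[p] \<cdot> ([(u div p)] \<cdot> \<one>) \<in> I" by (rule pI, rule add.int_pow_closed, rule one_closed)
    ultimately show ?thesis using pi_add_I[OF add.int_pow_closed[OF one_closed]] by simp
  qed
  define \<phi> where "\<phi> = (\<lambda>k::int. \<pi> ([k] \<cdot> \<one>))"
  have phom: "\<phi> \<in> ring_hom (residue_ring p) Q"
  proof (rule ring_hom_memI)
    fix x assume "x \<in> carrier (residue_ring p)"
    show "\<phi> x \<in> carrier Q" unfolding \<phi>_def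
      by (rule ring_hom_closed[OF hom], rule add.int_pow_closed, rule one_closed)
  next
    fix x y assume "x \<in> carrier (residue_ring p)" "y \<in> carrier (residue_ring p)"
    have "x \<otimes>\<^bsub>residue_ring p\<^esub> y = (x * y) mod p" by (simp add: residue_ring_def)
    hence "\<phi> (x \<otimes>\<^bsub>residue_ring p\<^esub> y) = \<pi> ([(x * y)] \<cdot> \<one>)" unfolding \<phi>_def using modp by simp
    also have "[(x * y)] \<cdot> \<one> = [x] \<cdot> \<one> \<otimes> [y] \<cdot> \<one>"
    proof -
      have "[x] \<cdot> \<one> \<otimes> [y] \<cdot> \<one> = [x] \<cdot> (\<one> \<otimes> [y] \<cdot> \<one>)"
        by (rule add_pow_ldistr_int[OF one_closed add.int_pow_closed[OF one_closed]])
      also have "\<dots> = [x] \<cdot> ([y] \<cdot> \<one>)" by simp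
      also have "\<dots> = [(y * x)] \<cdot> \<one>" by (rule add.int_pow_pow[OF one_closed])
      finally show ?thesis by (simp add: mult.commute)
    qed
    also have "\<pi> ([x] \<cdot> \<one> \<otimes> [y] \<cdot> \<one>) = \<phi> x \<otimes>\<^bsub>Q\<^esub> \<phi> y" unfolding \<phi>_def
      by (rule ring_hom_mult[OF hom add.int_pow_closed[OF one_closed] add.int_pow_closed[OF one_closed]])
    finally show "\<phi> (x \<otimes>\<^bsub>residue_ring p\<^esub> y) = \<phi> x \<otimes>\<^bsub>Q\<^esub> \<phi> y" .
  next
    fix x y assume "x \<in> carrier (residue_ring p)" "y \<in> carrier (residue_ring p)"
    have "x \<oplus>\<^bsub>residue_ring p\<^esub> y = (x + y) mod p" by (simp add: residue_ring_def)
    hence "\<phi> (x \<oplus>\<^bsub>residue_ring p\<^esub> y) = \<pi> ([(x + y)] \<cdot> \<one>)" unfolding \<phi>_def using modp by simp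
    also have "[(x + y)] \<cdot> \<one> = [x] \<cdot> \<one> \<oplus> [y] \<cdot> \<one>" by (rule add.int_pow_mult[OF one_closed])
    also have "\<pi> ([x] \<cdot> \<one> \<oplus> [y] \<cdot> \<one>) = \<phi> x \<oplus>\<^bsub>Q\<^esub> \<phi> y" unfolding \<phi>_def
      by (rule ring_hom_add[OF hom add.int_pow_closed[OF one_closed] add.int_pow_closed[OF one_closed]])
    finally show "\<phi> (x \<oplus>\<^bsub>residue_ring p\<^esub> y) = \<phi> x \<oplus>\<^bsub>Q\<^esub> \<phi> y" .
  next
    have "\<one>\<^bsub>residue_ring p\<^esub> = 1" by (simp add: residue_ring_def)
    hence "\<phi> \<one>\<^bsub>residue_ring p\<^esub> = \<pi> \<one>" unfolding \<phi>_def by simp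
    also have "\<dots> = \<one>\<^bsub>Q\<^esub>" by (rule ring_hom_one[OF hom])
    finally show "\<phi> \<one>\<^bsub>residue_ring p\<^esub> = \<one>\<^bsub>Q\<^esub>" .
  qed
  have cen: "\<forall>c\<in>carrier (residue_ring p). \<forall>x\<in>carrier Q. \<phi> c \<otimes>\<^bsub>Q\<^esub> x = x \<otimes>\<^bsub>Q\<^esub> \<phi> c"
  proof (intro ballI)
    fix c x assume "c \<in> carrier (residue_ring p)" "x \<in> carrier Q"
    then obtain s where s: "s \<in> carrier R" "x = \<pi> s" unfolding carQ by blast
    have k1: "[c] \<cdot> \<one> \<in> carrier R" by (rule add.int_pow_closed[OF one_closed])
    have "[c] \<cdot> \<one> \<otimes> s = [c] \<cdot> (\<one> \<otimes> s)" by (rule add_pow_ldistr_int[OF one_closed s(1)])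
    also have "\<dots> = [c] \<cdot> (s \<otimes> \<one>)" using s(1) by simp
    also have "\<dots> = s \<otimes> [c] \<cdot> \<one>" by (rule add_pow_rdistr_int[OF s(1) one_closed, symmetric])
    finally have e: "[c] \<cdot> \<one> \<otimes> s = s \<otimes> [c] \<cdot> \<one>" .
    have "\<phi> c \<otimes>\<^bsub>Q\<^esub> x = \<pi> ([c] \<cdot> \<one> \<otimes> s)" unfolding \<phi>_def s(2)
      by (rule ring_hom_mult[OF hom k1 s(1), symmetric])
    also have "\<dots> = \<pi> (s \<otimes> [c] \<cdot> \<one>)" using e by simp
    also have "\<dots> = x \<otimes>\<^bsub>Q\<^esub> \<phi> c" unfolding \<phi>_def s(2)
      by (rule ring_hom_mult[OF hom s(1) k1])
    finally show "\<phi> c \<otimes>\<^bsub>Q\<^esub> x = x \<otimes>\<^bsub>Q\<^esub> \<phi> c" .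
  qed
  have alg: "algebra_over (residue_ring p) Q \<phi>" unfolding algebra_over_def by (intro conjI rQ phom cen)
  have cQ: "countable (carrier Q)" unfolding carQ using cR by (rule countable_image)
  have a: "a \<in> carrier R" and b: "b \<in> carrier R" using NKeD(1,2)[OF ab] .
  have nil_a: "nilpotent_elem Q (\<pi> a \<otimes>\<^bsub>Q\<^esub> Z0)" if Z: "Z0 \<in> carrier Q" for Z0
  proof -
    obtain r where r': "Z0 = \<pi> r" "r \<in> carrier R" using Z[unfolded carQ] by (rule imageE)
    have r: "r \<in> carrier R" "Z0 = \<pi> r" using r' by simp_all
    have "\<pi> a \<otimes>\<^bsub>Q\<^esub> Z0 = \<pi> (a \<otimes> r)" unfolding r(2) by (rule ring_hom_mult[OF hom a r(1), symmetric])
    moreover have "nilpotent_elem R (a \<otimes> r)" by (rule NKeD(3)[OF ab r(1)])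
    ultimately show ?thesis using nilp_hom[OF rR rQ hom m_closed[OF a r(1)]] by simp
  qed
  have nil_b: "nilpotent_elem Q (\<pi> b \<otimes>\<^bsub>Q\<^esub> Z0)" if Z: "Z0 \<in> carrier Q" for Z0
  proof -
    obtain r where r': "Z0 = \<pi> r" "r \<in> carrier R" using Z[unfolded carQ] by (rule imageE)
    have r: "r \<in> carrier R" "Z0 = \<pi> r" using r' by simp_all
    have "\<pi> b \<otimes>\<^bsub>Q\<^esub> Z0 = \<pi> (b \<otimes> r)" unfolding r(2) by (rule ring_hom_mult[OF hom b r(1), symmetric])
    moreover have "nilpotent_elem R (b \<otimes> r)" by (rule NKeD(4)[OF ab r(1)])
    ultimately show ?thesis using nilp_hom[OF rR rQ hom m_closed[OF b r(1)]] by simp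
  qed
  have nn: "\<not> nilpotent_elem Q (\<pi> a \<oplus>\<^bsub>Q\<^esub> \<pi> b)"
  proof
    assume "nilpotent_elem Q (\<pi> a \<oplus>\<^bsub>Q\<^esub> \<pi> b)"
    then obtain n :: nat where n: "(\<pi> a \<oplus>\<^bsub>Q\<^esub> \<pi> b) [^]\<^bsub>Q\<^esub> n = \<zero>\<^bsub>Q\<^esub>"
      unfolding nilpotent_elem_def by blast
    have cc: "a \<oplus> b \<in> carrier R" using a b by (rule a_closed)
    have "\<pi> a \<oplus>\<^bsub>Q\<^esub> \<pi> b = \<pi> (a \<oplus> b)" by (rule ring_hom_add[OF hom a b, symmetric])
    hence "\<pi> ((a \<oplus> b) [^] n) = \<zero>\<^bsub>Q\<^esub>" using n hom_pow[OF rR hom cc] by simp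
    hence "(a \<oplus> b) [^] n \<in> I" using piz nat_pow_closed[OF cc] by blast
    then obtain s where "s \<in> carrier R" "(a \<oplus> b) [^] n = [p] \<cdot> s" unfolding I_def by blast
    thus False using nt by blast
  qed
  have "NKe Q (\<pi> a) (\<pi> b)" unfolding NKe_def
    using ring_hom_closed[OF hom a] ring_hom_closed[OF hom b] nil_a nil_b nn by blast
  from transport[OF rQ cQ alg this] show ?thesis .
qed

context ring
begin

abbreviation sc :: "int \<Rightarrow> 'a \<Rightarrow> 'a" where "sc k x \<equiv> add_pow R k x"

lemma sc_sc: "x \<in> carrier R \<Longrightarrow> sc a (sc b x) = sc (a * b) x"
  by (simp add: add.int_pow_pow mult.commute)

lemma sc_add: "x \<in> carrier R \<Longrightarrow> y \<in> carrier R \<Longrightarrow> sc a (x \<oplus> y) = sc a x \<oplus> sc a y"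
  by (rule add.int_pow_distrib)

lemma sc_ml: "x \<in> carrier R \<Longrightarrow> y \<in> carrier R \<Longrightarrow> sc a x \<otimes> y = sc a (x \<otimes> y)"
  by (rule add_pow_ldistr_int)

lemma sc_mr: "x \<in> carrier R \<Longrightarrow> y \<in> carrier R \<Longrightarrow> x \<otimes> sc a y = sc a (x \<otimes> y)"
  by (rule add_pow_rdistr_int)

lemma sc_closed: "x \<in> carrier R \<Longrightarrow> sc a x \<in> carrier R"
  by (rule add.int_pow_closed)

lemma sc_zero: "sc a \<zero> = \<zero>"
  by (rule add.int_pow_one)

lemma sc_one: "x \<in> carrier R \<Longrightarrow> sc 1 x = x"
  by (rule add.int_pow_1)

lemma sc_neg: "x \<in> carrier R \<Longrightarrow> sc a (\<ominus> x) = \<ominus> sc a x"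
  by (rule add.int_pow_inv)

lemmas sc_simps = sc_sc sc_add sc_ml sc_mr sc_closed sc_zero sc_one sc_neg

definition lrel :: "('a \<times> int) \<Rightarrow> ('a \<times> int) \<Rightarrow> bool" where
  "lrel x y \<longleftrightarrow> (\<exists>k::int. k > 0 \<and> sc (k * snd y) (fst x) = sc (k * snd x) (fst y))"

definition LP :: "('a \<times> int) set" where
  "LP = {x. fst x \<in> carrier R \<and> snd x > 0}"

lemma LP_iff: "(s, m) \<in> LP \<longleftrightarrow> s \<in> carrier R \<and> m > 0"
  unfolding LP_def by simp

lemma lrel_refl: "lrel x x"
  unfolding lrel_def by (intro exI[of _ 1]) simp

lemma lrel_sym: "lrel x y \<Longrightarrow> lrel y x"
  unfolding lrel_def by metis

lemma lrel_trans:
  assumes "x \<in> LP" "y \<in> LP" "z \<in> LP" "lrel x y" "lrel y z"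
  shows "lrel x z"
proof -
  obtain s m t n u w where xyz: "x = (s, m)" "y = (t, n)" "z = (u, w)" by (cases x, cases y, cases z) auto
  have s: "s \<in> carrier R" and t: "t \<in> carrier R" and u: "u \<in> carrier R" and n: "n > 0"
    using assms(1-3) unfolding xyz LP_iff by auto
  obtain k1 where k1: "k1 > 0" "sc (k1 * n) s = sc (k1 * m) t" using assms(4) unfolding lrel_def xyz by auto
  obtain k2 where k2: "k2 > 0" "sc (k2 * w) t = sc (k2 * n) u" using assms(5) unfolding lrel_def xyz by auto
  have "sc (k1 * k2 * n * w) s = sc (k2 * w) (sc (k1 * n) s)" using s by (simp add: sc_sc mult_ac)
  also have "\<dots> = sc (k2 * w) (sc (k1 * m) t)" using k1 by simp
  also have "\<dots> = sc (k1 * m) (sc (k2 * w) t)" using t by (simp add: sc_sc mult_ac)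
  also have "\<dots> = sc (k1 * m) (sc (k2 * n) u)" using k2 by simp
  also have "\<dots> = sc (k1 * k2 * n * m) u" using u by (simp add: sc_sc mult_ac)
  finally have "sc ((k1 * k2 * n) * w) s = sc ((k1 * k2 * n) * m) u" by simp
  moreover have "k1 * k2 * n > 0" using k1 k2 n by simp
  ultimately show ?thesis unfolding lrel_def xyz by auto
qed

definition lcls :: "('a \<times> int) \<Rightarrow> ('a \<times> int) set" where
  "lcls x = {y \<in> LP. lrel x y}"

lemma lcls_self: "x \<in> LP \<Longrightarrow> x \<in> lcls x"
  unfolding lcls_def using lrel_refl by simp

lemma lcls_eq:
  assumes "x \<in> LP" "y \<in> LP" "lrel x y"
  shows "lcls x = lcls y"
  unfolding lcls_def using assms lrel_trans lrel_sym by blast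

lemma lcls_eqD:
  assumes "x \<in> LP" "y \<in> LP" "lcls x = lcls y"
  shows "lrel x y"
  using lcls_self[OF assms(2)] assms(3) unfolding lcls_def by auto

lemma some_lcls:
  assumes "x \<in> LP"
  shows "(SOME z. z \<in> lcls x) \<in> LP" "lrel x (SOME z. z \<in> lcls x)"
proof -
  have "(SOME z. z \<in> lcls x) \<in> lcls x" using lcls_self[OF assms] by (rule someI)
  thus "(SOME z. z \<in> lcls x) \<in> LP" "lrel x (SOME z. z \<in> lcls x)" unfolding lcls_def by auto
qed

definition padd :: "('a \<times> int) \<Rightarrow> ('a \<times> int) \<Rightarrow> ('a \<times> int)" where
  "padd x y = (sc (snd y) (fst x) \<oplus> sc (snd x) (fst y), snd x * snd y)"

definition pmul :: "('a \<times> int) \<Rightarrow> ('a \<times> int) \<Rightarrow> ('a \<times> int)" where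
  "pmul x y = (fst x \<otimes> fst y, snd x * snd y)"

lemma padd_LP: "x \<in> LP \<Longrightarrow> y \<in> LP \<Longrightarrow> padd x y \<in> LP"
  unfolding LP_def padd_def by (auto intro!: a_closed sc_closed)

lemma pmul_LP: "x \<in> LP \<Longrightarrow> y \<in> LP \<Longrightarrow> pmul x y \<in> LP"
  unfolding LP_def pmul_def by auto

lemma padd_cong:
  assumes "x \<in> LP" "y \<in> LP" "x' \<in> LP" "y' \<in> LP" "lrel x x'" "lrel y y'"
  shows "lrel (padd x y) (padd x' y')"
proof -
  obtain s m t n s' m' t' n' where e: "x = (s, m)" "y = (t, n)" "x' = (s', m')" "y' = (t', n')"
    by (cases x, cases y, cases x', cases y') auto
  have c: "s \<in> carrier R" "t \<in> carrier R" "s' \<in> carrier R" "t' \<in> carrier R"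
    using assms(1-4) unfolding e LP_iff by auto
  obtain k1 where k1: "k1 > 0" "sc (k1 * m') s = sc (k1 * m) s'" using assms(5) unfolding lrel_def e by auto
  obtain k2 where k2: "k2 > 0" "sc (k2 * n') t = sc (k2 * n) t'" using assms(6) unfolding lrel_def e by auto
  have A: "sc (k1 * k2 * (m' * n') * n) s = sc (k1 * k2 * (m * n) * n') s'"
  proof -
    have "sc (k1 * k2 * (m' * n') * n) s = sc (k2 * n' * n) (sc (k1 * m') s)" using c by (simp add: sc_sc mult_ac)
    also have "\<dots> = sc (k2 * n' * n) (sc (k1 * m) s')" using k1 by simp
    also have "\<dots> = sc (k1 * k2 * (m * n) * n') s'" using c by (simp add: sc_sc mult_ac)
    finally show ?thesis .
  qed
  have B: "sc (k1 * k2 * (m' * n') * m) t = sc (k1 * k2 * (m * n) * m') t'"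
  proof -
    have "sc (k1 * k2 * (m' * n') * m) t = sc (k1 * m' * m) (sc (k2 * n') t)" using c by (simp add: sc_sc mult_ac)
    also have "\<dots> = sc (k1 * m' * m) (sc (k2 * n) t')" using k2 by simp
    also have "\<dots> = sc (k1 * k2 * (m * n) * m') t'" using c by (simp add: sc_sc mult_ac)
    finally show ?thesis .
  qed
  have "sc (k1 * k2 * (m' * n')) (sc n s \<oplus> sc m t) = sc (k1 * k2 * (m * n)) (sc n' s' \<oplus> sc m' t')"
    using A B c by (simp add: sc_add sc_closed sc_sc)
  moreover have "k1 * k2 > 0" using k1 k2 by simp
  ultimately show ?thesis unfolding lrel_def e padd_def by auto
qed

lemma pmul_cong:
  assumes "x \<in> LP" "y \<in> LP" "x' \<in> LP" "y' \<in> LP" "lrel x x'" "lrel y y'"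
  shows "lrel (pmul x y) (pmul x' y')"
proof -
  obtain s m t n s' m' t' n' where e: "x = (s, m)" "y = (t, n)" "x' = (s', m')" "y' = (t', n')"
    by (cases x, cases y, cases x', cases y') auto
  have c: "s \<in> carrier R" "t \<in> carrier R" "s' \<in> carrier R" "t' \<in> carrier R"
    using assms(1-4) unfolding e LP_iff by auto
  obtain k1 where k1: "k1 > 0" "sc (k1 * m') s = sc (k1 * m) s'" using assms(5) unfolding lrel_def e by auto
  obtain k2 where k2: "k2 > 0" "sc (k2 * n') t = sc (k2 * n) t'" using assms(6) unfolding lrel_def e by auto
  have "sc (k1 * k2 * (m' * n')) (s \<otimes> t) = sc (k1 * m') s \<otimes> sc (k2 * n') t"
    using c by (simp add: sc_ml sc_mr sc_closed sc_sc mult_ac)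
  also have "\<dots> = sc (k1 * m) s' \<otimes> sc (k2 * n) t'" using k1 k2 by simp
  also have "\<dots> = sc (k1 * k2 * (m * n)) (s' \<otimes> t')"
    using c by (simp add: sc_ml sc_mr sc_closed sc_sc mult_ac)
  finally have "sc (k1 * k2 * (m' * n')) (s \<otimes> t) = sc (k1 * k2 * (m * n)) (s' \<otimes> t')" .
  moreover have "k1 * k2 > 0" using k1 k2 by simp
  ultimately show ?thesis unfolding lrel_def e pmul_def by auto
qed

end

context ring
begin

definition Lrep :: "('a \<times> int) set \<Rightarrow> 'a \<times> int" where
  "Lrep XX = (SOME z. z \<in> XX)"

definition Loc :: "('a \<times> int) set ring" where
  "Loc = \<lparr>carrier = lcls ` LP,
          monoid.mult = (\<lambda>XX YY. lcls (pmul (Lrep XX) (Lrep YY))),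
          one = lcls (\<one>, 1),
          ring.zero = lcls (\<zero>, 1),
          ring.add = (\<lambda>XX YY. lcls (padd (Lrep XX) (Lrep YY)))\<rparr>"

lemma Loc_carrier: "carrier Loc = lcls ` LP" unfolding Loc_def by simp
lemma Loc_one: "\<one>\<^bsub>Loc\<^esub> = lcls (\<one>, 1)" unfolding Loc_def by simp
lemma Loc_zero: "\<zero>\<^bsub>Loc\<^esub> = lcls (\<zero>, 1)" unfolding Loc_def by simp

lemma Lrep_props:
  assumes "x \<in> LP" shows "Lrep (lcls x) \<in> LP" "lrel (Lrep (lcls x)) x"
  unfolding Lrep_def using some_lcls[OF assms] lrel_sym by auto

lemma Loc_add:
  assumes "x \<in> LP" "y \<in> LP"
  shows "lcls x \<oplus>\<^bsub>Loc\<^esub> lcls y = lcls (padd x y)"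
proof -
  have "lcls x \<oplus>\<^bsub>Loc\<^esub> lcls y = lcls (padd (Lrep (lcls x)) (Lrep (lcls y)))" unfolding Loc_def by simp
  also have "\<dots> = lcls (padd x y)"
    by (rule lcls_eq, rule padd_LP[OF Lrep_props(1)[OF assms(1)] Lrep_props(1)[OF assms(2)]],
        rule padd_LP[OF assms],
        rule padd_cong[OF Lrep_props(1)[OF assms(1)] Lrep_props(1)[OF assms(2)] assms
             Lrep_props(2)[OF assms(1)] Lrep_props(2)[OF assms(2)]])
  finally show ?thesis .
qed

lemma Loc_mul:
  assumes "x \<in> LP" "y \<in> LP"
  shows "lcls x \<otimes>\<^bsub>Loc\<^esub> lcls y = lcls (pmul x y)"
proof -
  have "lcls x \<otimes>\<^bsub>Loc\<^esub> lcls y = lcls (pmul (Lrep (lcls x)) (Lrep (lcls y)))" unfolding Loc_def by simp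
  also have "\<dots> = lcls (pmul x y)"
    by (rule lcls_eq, rule pmul_LP[OF Lrep_props(1)[OF assms(1)] Lrep_props(1)[OF assms(2)]],
        rule pmul_LP[OF assms],
        rule pmul_cong[OF Lrep_props(1)[OF assms(1)] Lrep_props(1)[OF assms(2)] assms
             Lrep_props(2)[OF assms(1)] Lrep_props(2)[OF assms(2)]])
  finally show ?thesis .
qed

lemma LocE:
  assumes "XX \<in> carrier Loc" obtains x where "x \<in> LP" "XX = lcls x"
  using assms unfolding Loc_carrier by blast

lemma LP_E:
  assumes "x \<in> LP" obtains s m where "x = (s, m)" "s \<in> carrier R" "m > 0"
  using assms unfolding LP_def by (cases x) auto

lemma one_LP: "(\<one>, 1) \<in> LP" unfolding LP_def by simp
lemma zero_LP: "(\<zero>, 1) \<in> LP" unfolding LP_def by simp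

lemma padd_assoc:
  assumes "x \<in> LP" "y \<in> LP" "z \<in> LP"
  shows "padd (padd x y) z = padd x (padd y z)"
proof -
  obtain s m where x: "x = (s, m)" "s \<in> carrier R" using assms(1) by (rule LP_E)
  obtain t n where y: "y = (t, n)" "t \<in> carrier R" using assms(2) by (rule LP_E)
  obtain u w where z: "z = (u, w)" "u \<in> carrier R" using assms(3) by (rule LP_E)
  show ?thesis unfolding x y z padd_def
    using x(2) y(2) z(2) by (simp add: sc_add sc_sc sc_closed a_assoc mult_ac)
qed

lemma padd_comm: "x \<in> LP \<Longrightarrow> y \<in> LP \<Longrightarrow> padd x y = padd y x"
  unfolding padd_def LP_def by (simp add: a_comm sc_closed mult.commute)

lemma padd_zero: "x \<in> LP \<Longrightarrow> padd (\<zero>, 1) x = x"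
  unfolding padd_def LP_def by (cases x) (simp add: sc_zero sc_one)

lemma pmul_assoc: "x \<in> LP \<Longrightarrow> y \<in> LP \<Longrightarrow> z \<in> LP \<Longrightarrow> pmul (pmul x y) z = pmul x (pmul y z)"
  unfolding pmul_def LP_def by (simp add: m_assoc mult.assoc)

lemma pmul_lone: "x \<in> LP \<Longrightarrow> pmul (\<one>, 1) x = x"
  unfolding pmul_def LP_def by (cases x) simp

lemma pmul_rone: "x \<in> LP \<Longrightarrow> pmul x (\<one>, 1) = x"
  unfolding pmul_def LP_def by (cases x) simp

lemma Loc_ring: "ring Loc"
proof (rule ringI)
  show "abelian_group Loc"
  proof (rule abelian_groupI)
    fix XX YY assume "XX \<in> carrier Loc" "YY \<in> carrier Loc"
    then obtain x y where xy: "x \<in> LP" "XX = lcls x" "y \<in> LP" "YY = lcls y" by (meson LocE)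
    show "XX \<oplus>\<^bsub>Loc\<^esub> YY \<in> carrier Loc"
      unfolding xy Loc_add[OF xy(1,3)] Loc_carrier using padd_LP[OF xy(1,3)] by (rule imageI)
    show "XX \<oplus>\<^bsub>Loc\<^esub> YY = YY \<oplus>\<^bsub>Loc\<^esub> XX"
      unfolding xy Loc_add[OF xy(1,3)] Loc_add[OF xy(3,1)] padd_comm[OF xy(1,3)] ..
  next
    show "\<zero>\<^bsub>Loc\<^esub> \<in> carrier Loc" unfolding Loc_zero Loc_carrier using zero_LP by (rule imageI)
  next
    fix XX YY ZZ assume "XX \<in> carrier Loc" "YY \<in> carrier Loc" "ZZ \<in> carrier Loc"
    then obtain x y z where xyz: "x \<in> LP" "XX = lcls x" "y \<in> LP" "YY = lcls y" "z \<in> LP" "ZZ = lcls z"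
      by (meson LocE)
    show "XX \<oplus>\<^bsub>Loc\<^esub> YY \<oplus>\<^bsub>Loc\<^esub> ZZ = XX \<oplus>\<^bsub>Loc\<^esub> (YY \<oplus>\<^bsub>Loc\<^esub> ZZ)"
      unfolding xyz Loc_add[OF xyz(1,3)] Loc_add[OF xyz(3,5)]
        Loc_add[OF padd_LP[OF xyz(1,3)] xyz(5)] Loc_add[OF xyz(1) padd_LP[OF xyz(3,5)]]
        padd_assoc[OF xyz(1,3,5)] ..
  next
    fix XX assume "XX \<in> carrier Loc"
    then obtain x where x: "x \<in> LP" "XX = lcls x" by (rule LocE)
    show "\<zero>\<^bsub>Loc\<^esub> \<oplus>\<^bsub>Loc\<^esub> XX = XX"
      unfolding x Loc_zero Loc_add[OF zero_LP x(1)] padd_zero[OF x(1)] ..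
    obtain s m where sm: "x = (s, m)" "s \<in> carrier R" "m > 0" using x(1) by (rule LP_E)
    have nLP: "(\<ominus> s, m) \<in> LP" using sm by (simp add: LP_iff)
    have "lcls (\<ominus> s, m) \<oplus>\<^bsub>Loc\<^esub> XX = lcls (padd (\<ominus> s, m) (s, m))"
      unfolding x sm(1) by (rule Loc_add[OF nLP x(1)[unfolded sm(1)]])
    also have "padd (\<ominus> s, m) (s, m) = (\<zero>, m * m)"
      unfolding padd_def using sm(2) by (simp add: sc_neg sc_closed l_neg)
    also have "lcls (\<zero>, m * m) = lcls (\<zero>, 1)"
      by (rule lcls_eq, simp add: LP_iff sm(3), rule zero_LP)
         (unfold lrel_def, rule exI[of _ 1], simp add: sc_zero)
    finally have "lcls (\<ominus> s, m) \<oplus>\<^bsub>Loc\<^esub> XX = \<zero>\<^bsub>Loc\<^esub>" unfolding Loc_zero .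
    moreover have "lcls (\<ominus> s, m) \<in> carrier Loc" unfolding Loc_carrier using nLP by (rule imageI)
    ultimately show "\<exists>YY\<in>carrier Loc. YY \<oplus>\<^bsub>Loc\<^esub> XX = \<zero>\<^bsub>Loc\<^esub>" by blast
  qed
next
  show "monoid Loc"
  proof (rule monoidI)
    fix XX YY assume "XX \<in> carrier Loc" "YY \<in> carrier Loc"
    then obtain x y where xy: "x \<in> LP" "XX = lcls x" "y \<in> LP" "YY = lcls y" by (meson LocE)
    show "XX \<otimes>\<^bsub>Loc\<^esub> YY \<in> carrier Loc"
      unfolding xy Loc_mul[OF xy(1,3)] Loc_carrier using pmul_LP[OF xy(1,3)] by (rule imageI)
  next
    show "\<one>\<^bsub>Loc\<^esub> \<in> carrier Loc" unfolding Loc_one Loc_carrier using one_LP by (rule imageI)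
  next
    fix XX YY ZZ assume "XX \<in> carrier Loc" "YY \<in> carrier Loc" "ZZ \<in> carrier Loc"
    then obtain x y z where xyz: "x \<in> LP" "XX = lcls x" "y \<in> LP" "YY = lcls y" "z \<in> LP" "ZZ = lcls z"
      by (meson LocE)
    show "XX \<otimes>\<^bsub>Loc\<^esub> YY \<otimes>\<^bsub>Loc\<^esub> ZZ = XX \<otimes>\<^bsub>Loc\<^esub> (YY \<otimes>\<^bsub>Loc\<^esub> ZZ)"
      unfolding xyz Loc_mul[OF xyz(1,3)] Loc_mul[OF xyz(3,5)]
        Loc_mul[OF pmul_LP[OF xyz(1,3)] xyz(5)] Loc_mul[OF xyz(1) pmul_LP[OF xyz(3,5)]]
        pmul_assoc[OF xyz(1,3,5)] ..
  next
    fix XX assume "XX \<in> carrier Loc"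
    then obtain x where x: "x \<in> LP" "XX = lcls x" by (rule LocE)
    show "\<one>\<^bsub>Loc\<^esub> \<otimes>\<^bsub>Loc\<^esub> XX = XX"
      unfolding x Loc_one Loc_mul[OF one_LP x(1)] pmul_lone[OF x(1)] ..
    show "XX \<otimes>\<^bsub>Loc\<^esub> \<one>\<^bsub>Loc\<^esub> = XX"
      unfolding x Loc_one Loc_mul[OF x(1) one_LP] pmul_rone[OF x(1)] ..
  qed
next
  fix XX YY ZZ assume "XX \<in> carrier Loc" "YY \<in> carrier Loc" "ZZ \<in> carrier Loc"
  then obtain x y z where xyz: "x \<in> LP" "XX = lcls x" "y \<in> LP" "YY = lcls y" "z \<in> LP" "ZZ = lcls z"
    by (meson LocE)
  obtain s m where x: "x = (s, m)" "s \<in> carrier R" "m > 0" using xyz(1) by (rule LP_E)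
  obtain t n where y: "y = (t, n)" "t \<in> carrier R" "n > 0" using xyz(3) by (rule LP_E)
  obtain u w where z: "z = (u, w)" "u \<in> carrier R" "w > 0" using xyz(5) by (rule LP_E)
  have LPs: "pmul (padd x y) z \<in> LP" "padd (pmul x z) (pmul y z) \<in> LP"
    "pmul z (padd x y) \<in> LP" "padd (pmul z x) (pmul z y) \<in> LP"
    using xyz(1,3,5) by (simp_all add: padd_LP pmul_LP)
  have "lrel (pmul (padd x y) z) (padd (pmul x z) (pmul y z))"
    unfolding lrel_def x y z padd_def pmul_def
    using x(2) y(2) z(2)
    by (intro exI[of _ 1]) (simp add: sc_add sc_sc sc_closed sc_ml sc_mr l_distr mult_ac)
  hence "lcls (pmul (padd x y) z) = lcls (padd (pmul x z) (pmul y z))" using LPs by (intro lcls_eq)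
  thus "(XX \<oplus>\<^bsub>Loc\<^esub> YY) \<otimes>\<^bsub>Loc\<^esub> ZZ = XX \<otimes>\<^bsub>Loc\<^esub> ZZ \<oplus>\<^bsub>Loc\<^esub> YY \<otimes>\<^bsub>Loc\<^esub> ZZ"
    unfolding xyz(2,4,6) Loc_add[OF xyz(1,3)] Loc_mul[OF padd_LP[OF xyz(1,3)] xyz(5)]
      Loc_mul[OF xyz(1,5)] Loc_mul[OF xyz(3,5)] Loc_add[OF pmul_LP[OF xyz(1,5)] pmul_LP[OF xyz(3,5)]] .
  have "lrel (pmul z (padd x y)) (padd (pmul z x) (pmul z y))"
    unfolding lrel_def x y z padd_def pmul_def
    using x(2) y(2) z(2)
    by (intro exI[of _ 1]) (simp add: sc_add sc_sc sc_closed sc_ml sc_mr r_distr mult_ac)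
  hence "lcls (pmul z (padd x y)) = lcls (padd (pmul z x) (pmul z y))" using LPs by (intro lcls_eq)
  thus "ZZ \<otimes>\<^bsub>Loc\<^esub> (XX \<oplus>\<^bsub>Loc\<^esub> YY) = ZZ \<otimes>\<^bsub>Loc\<^esub> XX \<oplus>\<^bsub>Loc\<^esub> ZZ \<otimes>\<^bsub>Loc\<^esub> YY"
    unfolding xyz(2,4,6) Loc_add[OF xyz(1,3)] Loc_mul[OF xyz(5) padd_LP[OF xyz(1,3)]]
      Loc_mul[OF xyz(5,1)] Loc_mul[OF xyz(5,3)] Loc_add[OF pmul_LP[OF xyz(5,1)] pmul_LP[OF xyz(5,3)]] .
qed

end

context ring
begin

definition Lphi :: "rat \<Rightarrow> ('a \<times> int) set" where
  "Lphi q = lcls (sc (fst (quotient_of q)) \<one>, snd (quotient_of q))"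

lemma scone_LP: "b > 0 \<Longrightarrow> (sc a \<one>, b) \<in> LP"
  unfolding LP_iff by (simp add: sc_closed)

lemma phi_eq:
  assumes "b > 0" "b' > 0" "a * b' = a' * b"
  shows "lcls (sc a \<one>, b) = lcls (sc a' \<one>, b')"
proof (rule lcls_eq[OF scone_LP[OF assms(1)] scone_LP[OF assms(2)]])
  have "sc b' (sc a \<one>) = sc b (sc a' \<one>)"
    by (simp add: sc_sc assms(3) mult.commute)
  thus "lrel (sc a \<one>, b) (sc a' \<one>, b')" unfolding lrel_def by (intro exI[of _ 1]) simp
qed

lemma phi_frac:
  assumes "b > 0"
  shows "Lphi (of_int a / of_int b) = lcls (sc a \<one>, b)"
proof -
  obtain a0 b0 where q: "quotient_of (of_int a / of_int b) = (a0, b0)" by (cases "quotient_of (of_int a / of_int b)")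
  have b0: "b0 > 0" using quotient_of_denom_pos[OF q] .
  have "of_int a0 / of_int b0 = (of_int a / of_int b :: rat)" using quotient_of_div[OF q] by simp
  hence "of_int a0 * of_int b = (of_int a * of_int b0 :: rat)" using assms b0
    by (simp add: frac_eq_eq)
  hence "a0 * b = a * b0" by (metis of_int_eq_iff of_int_mult)
  hence "lcls (sc a0 \<one>, b0) = lcls (sc a \<one>, b)" by (rule phi_eq[OF b0 assms])
  thus ?thesis unfolding Lphi_def q by simp
qed

lemma rat_rep: fixes q :: rat obtains a b where "b > 0" "q = of_int a / of_int b"
proof -
  obtain a b where q: "quotient_of q = (a, b)" by (cases "quotient_of q")
  show ?thesis using that[OF quotient_of_denom_pos[OF q] quotient_of_div[OF q]] .
qed

lemma Lphi_hom: "Lphi \<in> ring_hom rat_ring Loc"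
proof (rule ring_hom_memI)
  fix x :: rat
  obtain a b where ab: "b > 0" "x = of_int a / of_int b" by (rule rat_rep)
  show "Lphi x \<in> carrier Loc" unfolding ab phi_frac[OF ab(1)] Loc_carrier
    using scone_LP[OF ab(1)] by (rule imageI)
next
  fix x y :: rat
  obtain a b where ab: "b > 0" "x = of_int a / of_int b" by (rule rat_rep)
  obtain c d where cd: "d > 0" "y = of_int c / of_int d" by (rule rat_rep)
  have bd: "b * d > 0" using ab cd by simp
  have e: "x \<otimes>\<^bsub>rat_ring\<^esub> y = of_int (a * c) / of_int (b * d)"
    unfolding rat_ring_def ab cd by simp
  have "Lphi (x \<otimes>\<^bsub>rat_ring\<^esub> y) = lcls (sc (a * c) \<one>, b * d)" by (subst e, rule phi_frac[OF bd])
  also have "\<dots> = lcls (pmul (sc a \<one>, b) (sc c \<one>, d))"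
    unfolding pmul_def by (simp add: sc_ml sc_sc sc_closed mult.commute)
  also have "\<dots> = Lphi x \<otimes>\<^bsub>Loc\<^esub> Lphi y"
    unfolding ab cd phi_frac[OF ab(1)] phi_frac[OF cd(1)] Loc_mul[OF scone_LP[OF ab(1)] scone_LP[OF cd(1)]] ..
  finally show "Lphi (x \<otimes>\<^bsub>rat_ring\<^esub> y) = Lphi x \<otimes>\<^bsub>Loc\<^esub> Lphi y" .
next
  fix x y :: rat
  obtain a b where ab: "b > 0" "x = of_int a / of_int b" by (rule rat_rep)
  obtain c d where cd: "d > 0" "y = of_int c / of_int d" by (rule rat_rep)
  have bd: "b * d > 0" using ab cd by simp
  have e: "x \<oplus>\<^bsub>rat_ring\<^esub> y = of_int (d * a + b * c) / of_int (b * d)"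
    unfolding rat_ring_def ab cd using ab(1) cd(1) by (simp add: field_simps)
  have "Lphi (x \<oplus>\<^bsub>rat_ring\<^esub> y) = lcls (sc (d * a + b * c) \<one>, b * d)" by (subst e, rule phi_frac[OF bd])
  also have "\<dots> = lcls (padd (sc a \<one>, b) (sc c \<one>, d))"
    unfolding padd_def by (simp add: sc_sc add.int_pow_mult)
  also have "\<dots> = Lphi x \<oplus>\<^bsub>Loc\<^esub> Lphi y"
    unfolding ab cd phi_frac[OF ab(1)] phi_frac[OF cd(1)] Loc_add[OF scone_LP[OF ab(1)] scone_LP[OF cd(1)]] ..
  finally show "Lphi (x \<oplus>\<^bsub>rat_ring\<^esub> y) = Lphi x \<oplus>\<^bsub>Loc\<^esub> Lphi y" .
next
  have "\<one>\<^bsub>rat_ring\<^esub> = of_int 1 / of_int 1" unfolding rat_ring_def by simp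
  hence "Lphi \<one>\<^bsub>rat_ring\<^esub> = lcls (sc 1 \<one>, 1)" using phi_frac[of 1 1] by simp
  thus "Lphi \<one>\<^bsub>rat_ring\<^esub> = \<one>\<^bsub>Loc\<^esub>" unfolding Loc_one by (simp add: sc_one)
qed

lemma Lphi_cen:
  "\<forall>c\<in>carrier rat_ring. \<forall>x\<in>carrier Loc. Lphi c \<otimes>\<^bsub>Loc\<^esub> x = x \<otimes>\<^bsub>Loc\<^esub> Lphi c"
proof (intro ballI)
  fix c :: rat and XX assume "XX \<in> carrier Loc"
  then obtain x where x: "x \<in> LP" "XX = lcls x" by (rule LocE)
  obtain s m where sm: "x = (s, m)" "s \<in> carrier R" "m > 0" using x(1) by (rule LP_E)
  obtain a b where ab: "b > 0" "c = of_int a / of_int b" by (rule rat_rep)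
  have "pmul (sc a \<one>, b) x = pmul x (sc a \<one>, b)"
    unfolding pmul_def sm(1) using sm(2) by (simp add: sc_ml sc_mr mult.commute)
  thus "Lphi c \<otimes>\<^bsub>Loc\<^esub> XX = XX \<otimes>\<^bsub>Loc\<^esub> Lphi c"
    unfolding ab phi_frac[OF ab(1)] x(2) Loc_mul[OF scone_LP[OF ab(1)] x(1)] Loc_mul[OF x(1) scone_LP[OF ab(1)]]
    by simp
qed

lemma Loc_pow:
  assumes "(s, m) \<in> LP"
  shows "lcls (s, m) [^]\<^bsub>Loc\<^esub> (n::nat) = lcls (s [^] n, m ^ n)"
proof (induction n)
  case 0 then show ?case by (simp add: Loc_one)
next
  case (Suc n)
  have s: "s \<in> carrier R" "m > 0" using assms unfolding LP_iff by auto
  have p: "(s [^] n, m ^ n) \<in> LP" using s unfolding LP_iff by simp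
  have "lcls (s, m) [^]\<^bsub>Loc\<^esub> Suc n = lcls (s [^] n, m ^ n) \<otimes>\<^bsub>Loc\<^esub> lcls (s, m)" using Suc by simp
  also have "\<dots> = lcls (pmul (s [^] n, m ^ n) (s, m))" by (rule Loc_mul[OF p assms])
  also have "\<dots> = lcls (s [^] Suc n, m ^ Suc n)" unfolding pmul_def by (simp add: mult.commute)
  finally show ?case .
qed

lemma Loc_zero_eq: "m > 0 \<Longrightarrow> lcls (\<zero>, m) = \<zero>\<^bsub>Loc\<^esub>"
  unfolding Loc_zero
  by (rule lcls_eq, simp add: LP_iff, rule zero_LP) (unfold lrel_def, rule exI[of _ 1], simp add: sc_zero)

lemma Q_case_loc:
  assumes cR: "countable (carrier R)" and ab: "NKe R a b"
    and nt: "\<forall>k::int. k > 0 \<longrightarrow> (\<forall>n::nat. sc k ((a \<oplus> b) [^] n) \<noteq> \<zero>)"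
  shows "\<exists>(A::nat ring) \<phi>. countably_generated_algebra rat_ring A \<phi> \<and> NK A"
proof -
  have a: "a \<in> carrier R" and b: "b \<in> carrier R" using NKeD(1,2)[OF ab] .
  have rL: "ring Loc" by (rule Loc_ring)
  have alg: "algebra_over rat_ring Loc Lphi" unfolding algebra_over_def
    by (intro conjI rL Lphi_hom Lphi_cen)
  have "LP \<subseteq> carrier R \<times> UNIV" unfolding LP_def by auto
  moreover have "countable (carrier R \<times> (UNIV :: int set))" using cR by simp
  ultimately have "countable LP" by (rule countable_subset)
  hence cL: "countable (carrier Loc)" unfolding Loc_carrier by (rule countable_image)
  have aLP: "(a, 1) \<in> LP" and bLP: "(b, 1) \<in> LP" using a b by (simp_all add: LP_iff)
  have nil: "nilpotent_elem Loc (lcls (v, 1) \<otimes>\<^bsub>Loc\<^esub> ZZ)"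
    if vLP: "(v, 1) \<in> LP" and nv: "\<And>r. r \<in> carrier R \<Longrightarrow> nilpotent_elem R (v \<otimes> r)"
      and Zc: "ZZ \<in> carrier Loc" for v ZZ
  proof -
    obtain z where z: "z \<in> LP" "ZZ = lcls z" using Zc by (rule LocE)
    obtain r m where rm: "z = (r, m)" "r \<in> carrier R" "m > 0" using z(1) by (rule LP_E)
    have v: "v \<in> carrier R" using vLP by (simp add: LP_iff)
    have e: "lcls (v, 1) \<otimes>\<^bsub>Loc\<^esub> ZZ = lcls (v \<otimes> r, m)"
    proof -
      have "lcls (v, 1) \<otimes>\<^bsub>Loc\<^esub> ZZ = lcls (pmul (v, 1) z)" unfolding z(2) by (rule Loc_mul[OF vLP z(1)])
      thus ?thesis unfolding rm(1) pmul_def by simp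
    qed
    obtain N :: nat where N: "(v \<otimes> r) [^] N = \<zero>" using nv[OF rm(2)] unfolding nilpotent_elem_def by blast
    have "(v \<otimes> r, m) \<in> LP" using v rm by (simp add: LP_iff)
    hence "lcls (v \<otimes> r, m) [^]\<^bsub>Loc\<^esub> N = lcls (\<zero>, m ^ N)" using Loc_pow N by simp
    also have "\<dots> = \<zero>\<^bsub>Loc\<^esub>" by (rule Loc_zero_eq) (simp add: rm(3))
    finally show ?thesis unfolding e nilpotent_elem_def by blast
  qed
  have nn: "\<not> nilpotent_elem Loc (lcls (a, 1) \<oplus>\<^bsub>Loc\<^esub> lcls (b, 1))"
  proof
    assume "nilpotent_elem Loc (lcls (a, 1) \<oplus>\<^bsub>Loc\<^esub> lcls (b, 1))"
    then obtain n :: nat where n: "(lcls (a, 1) \<oplus>\<^bsub>Loc\<^esub> lcls (b, 1)) [^]\<^bsub>Loc\<^esub> n = \<zero>\<^bsub>Loc\<^esub>"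
      unfolding nilpotent_elem_def by blast
    have e: "lcls (a, 1) \<oplus>\<^bsub>Loc\<^esub> lcls (b, 1) = lcls (a \<oplus> b, 1)"
      unfolding Loc_add[OF aLP bLP] padd_def using a b by (simp add: sc_one)
    have cLP: "(a \<oplus> b, 1) \<in> LP" using a b by (simp add: LP_iff)
    have "lcls ((a \<oplus> b) [^] n, 1) = lcls (\<zero>, 1)" using n unfolding e Loc_pow[OF cLP] Loc_zero by simp
    hence "lrel ((a \<oplus> b) [^] n, 1) (\<zero>, 1)"
      by (rule lcls_eqD[rotated 2]) (use a b in \<open>simp_all add: LP_iff\<close>)
    then obtain k :: int where "k > 0" "sc k ((a \<oplus> b) [^] n) = \<zero>"
      unfolding lrel_def by (auto simp: sc_zero)
    thus False using nt by blast
  qed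
  have "NKe Loc (lcls (a, 1)) (lcls (b, 1))" unfolding NKe_def
  proof (intro conjI ballI)
    show "lcls (a, 1) \<in> carrier Loc" unfolding Loc_carrier using aLP by (rule imageI)
    show "lcls (b, 1) \<in> carrier Loc" unfolding Loc_carrier using bLP by (rule imageI)
  next
    fix ZZ assume Zc: "ZZ \<in> carrier Loc"
    show "nilpotent_elem Loc (lcls (a, 1) \<otimes>\<^bsub>Loc\<^esub> ZZ)" by (rule nil[OF aLP _ Zc], rule NKeD(3)[OF ab])
  next
    fix ZZ assume Zc: "ZZ \<in> carrier Loc"
    show "nilpotent_elem Loc (lcls (b, 1) \<otimes>\<^bsub>Loc\<^esub> ZZ)" by (rule nil[OF bLP _ Zc], rule NKeD(4)[OF ab])
  next
    show "\<not> nilpotent_elem Loc (lcls (a, 1) \<oplus>\<^bsub>Loc\<^esub> lcls (b, 1))" by (rule nn)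
  qed
  from transport[OF rL cL alg this] show ?thesis .
qed

end

theorem mainTheorem7:
  shows "((\<exists>R::'a ring. ring R \<and> NK R) \<longrightarrow> exists_cg_NK_algebra TYPE(nat))
       \<and> (exists_cg_NK_algebra TYPE('b) \<longrightarrow> (\<exists>R::'b ring. ring R \<and> NK R))"
proof (intro conjI impI)
  assume "\<exists>R::'a ring. ring R \<and> NK R"
  then obtain R :: "'a ring" where R: "ring R" "NK R" by blast
  obtain S :: "'a ring" and a b where S: "ring S" "countable (carrier S)" "NKe S a b"
    using sub_NK[OF R] by blast
  have a: "a \<in> carrier S" and b: "b \<in> carrier S" using NKeD(1,2)[OF S(3)] .
  have c: "a \<oplus>\<^bsub>S\<^esub> b \<in> carrier S" using ring.ring_simprules(1)[OF S(1) a b] .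
  have nn: "\<not> nilpotent_elem S (a \<oplus>\<^bsub>S\<^esub> b)" using NKeD(5)[OF S(3)] .
  from torsion_dich[OF S(1) c nn] show "exists_cg_NK_algebra TYPE(nat)"
  proof
    assume "\<exists>p::int. Factorial_Ring.prime p \<and> (\<forall>n::nat. \<forall>s\<in>carrier S. (a \<oplus>\<^bsub>S\<^esub> b) [^]\<^bsub>S\<^esub> n \<noteq> [p] \<cdot>\<^bsub>S\<^esub> s)"
    then obtain p :: int where p: "Factorial_Ring.prime p"
      "\<forall>n::nat. \<forall>s\<in>carrier S. (a \<oplus>\<^bsub>S\<^esub> b) [^]\<^bsub>S\<^esub> n \<noteq> [p] \<cdot>\<^bsub>S\<^esub> s" by blast
    have "\<exists>(A::nat ring) \<phi>. countably_generated_algebra (residue_ring p) A \<phi> \<and> NK A"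
      by (rule Zp_case[OF S p])
    thus ?thesis unfolding exists_cg_NK_algebra_def using p(1) by blast
  next
    assume "\<forall>k::int. k > 0 \<longrightarrow> (\<forall>n::nat. [k] \<cdot>\<^bsub>S\<^esub> ((a \<oplus>\<^bsub>S\<^esub> b) [^]\<^bsub>S\<^esub> n) \<noteq> \<zero>\<^bsub>S\<^esub>)"
    hence "\<exists>(A::nat ring) \<phi>. countably_generated_algebra rat_ring A \<phi> \<and> NK A"
      by (rule ring.Q_case_loc[OF S(1) S(2) S(3)])
    thus ?thesis unfolding exists_cg_NK_algebra_def by blast
  qed
next
  assume "exists_cg_NK_algebra TYPE('b)"
  show "\<exists>R::'b ring. ring R \<and> NK R"
  proof -
    have "(\<exists>(A::'b ring) \<phi>. countably_generated_algebra rat_ring A \<phi> \<and> NK A) \<or>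
     (\<exists>p::int. Factorial_Ring.prime p \<and> (\<exists>(A::'b ring) \<phi>. countably_generated_algebra (residue_ring p) A \<phi> \<and> NK A))"
      using \<open>exists_cg_NK_algebra TYPE('b)\<close> unfolding exists_cg_NK_algebra_def .
    thus ?thesis unfolding countably_generated_algebra_def algebra_over_def by blast
  qed
qed

end
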